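(* Let $\mathcal{P}$ be a finite poset and $L=\mathfrak{g}^{\prec}(\mathcal{P})$. Then (i) $b(L)\le |\{p\prec q : p\prec q\notin Rel_E(\mathcal{P})\}|-1$, and (ii) $b(L)\le |Rel_{\overline{C}}(\mathcal{P})|$.
   Context: All Lie algebras are over an algebraically closed field $\mathbf{k}$ of characteristic zero. A finite poset $(\mathcal{P},\preceq)$ has underlying set $\{1,\dots,n\}$, labeled so that $x\preceq y$ implies $x\le y$ as integers. Write $x\prec y$ if $x\preceq y$ and $x\ne y$. $Ext(\mathcal{P})$ is the set of minimal and maximal elements of $\mathcal{P}$, and $Rel_E(\mathcal{P})$ is the set of strict relations $p\prec q$ with $p,q\in Ext(\mathcal{P})$. A strict relation $p\prec q$ is covering if there is no $z$ with $p\prec z\prec q$; $Rel_{\overline{C}}(\mathcal{P})$ is the set of non-covering strict relations. The nilpotent Lie poset algebra $\mathfrak{g}^{\prec}(\mathcal{P})$ is the Lie subalgebra of $\mathfrak{gl}(n,\mathbf{k})$ spanned by the matrix units $E_{i,j}$ with $i\prec j$, with bracket $[X,Y]=XY-YX$. The breadth of a Lie algebra $L$ is $b(L)=\max_{x\in L}\operatorname{rank}(\mathrm{ad}_x)$, where $\mathrm{ad}_x=[x,-]$. *)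

theory Defs
  imports Main "HOL-Computational_Algebra.Polynomial" "HOL-Library.Function_Algebras"
begin

text \<open>A finite poset on {1..n} is given by its (reflexive) order relation R,
  a partial order on {1..n}; labelling condition: (x,y) in R implies x \<le> y.\<close>

definition strict_rel :: "(nat \<times> nat) set \<Rightarrow> (nat \<times> nat) set" where
  "strict_rel R = {(x, y). (x, y) \<in> R \<and> x \<noteq> y}"

definition minimal_elts :: "nat set \<Rightarrow> (nat \<times> nat) set \<Rightarrow> nat set" where
  "minimal_elts A R = {x \<in> A. \<not> (\<exists>y. (y, x) \<in> strict_rel R)}"

definition maximal_elts :: "nat set \<Rightarrow> (nat \<times> nat) set \<Rightarrow> nat set" where
  "maximal_elts A R = {x \<in> A. \<not> (\<exists>y. (x, y) \<in> strict_rel R)}"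

definition Ext :: "nat set \<Rightarrow> (nat \<times> nat) set \<Rightarrow> nat set" where
  "Ext A R = minimal_elts A R \<union> maximal_elts A R"

definition Rel_E :: "nat set \<Rightarrow> (nat \<times> nat) set \<Rightarrow> (nat \<times> nat) set" where
  "Rel_E A R = {(p, q) \<in> strict_rel R. p \<in> Ext A R \<and> q \<in> Ext A R}"

definition Rel_nonC :: "(nat \<times> nat) set \<Rightarrow> (nat \<times> nat) set" where
  "Rel_nonC R = {(p, q) \<in> strict_rel R. \<exists>z. (p, z) \<in> strict_rel R \<and> (z, q) \<in> strict_rel R}"

text \<open>n x n matrices over 'k with indices 1..n, as functions; the product sums over 1..n.\<close>

definition mat_mult :: "nat \<Rightarrow> (nat \<Rightarrow> nat \<Rightarrow> 'k::field) \<Rightarrow> (nat \<Rightarrow> nat \<Rightarrow> 'k) \<Rightarrow> (nat \<Rightarrow> nat \<Rightarrow> 'k)" where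
  "mat_mult n X Y = (\<lambda>i j. \<Sum>k\<in>{1..n}. X i k * Y k j)"

definition mat_bracket :: "nat \<Rightarrow> (nat \<Rightarrow> nat \<Rightarrow> 'k::field) \<Rightarrow> (nat \<Rightarrow> nat \<Rightarrow> 'k) \<Rightarrow> (nat \<Rightarrow> nat \<Rightarrow> 'k)" where
  "mat_bracket n X Y = (\<lambda>i j. mat_mult n X Y i j - mat_mult n Y X i j)"

definition mat_scale :: "'k::field \<Rightarrow> (nat \<Rightarrow> nat \<Rightarrow> 'k) \<Rightarrow> (nat \<Rightarrow> nat \<Rightarrow> 'k)" where
  "mat_scale c X = (\<lambda>i j. c * X i j)"

text \<open>The nilpotent Lie poset algebra: span of E_{ij} with i \<prec> j, i.e. the matrices
  whose entries vanish outside the strict relations.\<close>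

definition poset_lie_alg :: "(nat \<times> nat) set \<Rightarrow> (nat \<Rightarrow> nat \<Rightarrow> 'k::field) set" where
  "poset_lie_alg R = {X. \<forall>i j. (i, j) \<notin> strict_rel R \<longrightarrow> X i j = 0}"

definition ad_rank :: "nat \<Rightarrow> (nat \<Rightarrow> nat \<Rightarrow> 'k::field) set \<Rightarrow> (nat \<Rightarrow> nat \<Rightarrow> 'k) \<Rightarrow> nat" where
  "ad_rank n L x = vector_space.dim mat_scale ((mat_bracket n x) ` L)"

definition breadth :: "nat \<Rightarrow> (nat \<Rightarrow> nat \<Rightarrow> 'k::field) set \<Rightarrow> nat" where
  "breadth n L = Max (ad_rank n L ` L)"

end

theory Submission
  imports Defs
begin

lemma vs_mat: "vector_space (mat_scale :: 'k::field \<Rightarrow> (nat \<Rightarrow> nat \<Rightarrow> 'k) \<Rightarrow> _)"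
  by unfold_locales (auto simp: mat_scale_def fun_eq_iff algebra_simps)

lemma sum_app: "(\<Sum>a\<in>A. f a) x = (\<Sum>a\<in>A. f a x)"
  by (induction A rule: infinite_finite_induct) auto

lemma sum_app2: "(\<Sum>a\<in>A. f a) x y = (\<Sum>a\<in>A. f a x y)"
  by (simp add: sum_app)

definition Em :: "nat \<Rightarrow> nat \<Rightarrow> (nat \<Rightarrow> nat \<Rightarrow> 'k::field)" where
  "Em p q = (\<lambda>i j. if i = p \<and> j = q then 1 else 0)"

lemma mat_decomp:
  fixes M :: "nat \<Rightarrow> nat \<Rightarrow> 'k::field"
  assumes "finite F" "\<And>i j. (i, j) \<notin> F \<Longrightarrow> M i j = 0"
  shows "M = (\<Sum>e\<in>F. mat_scale (M (fst e) (snd e)) (Em (fst e) (snd e)))"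
proof (intro ext)
  fix i j
  have "(\<Sum>e\<in>F. mat_scale (M (fst e) (snd e)) (Em (fst e) (snd e))) i j
      = (\<Sum>e\<in>F. M (fst e) (snd e) * (if e = (i,j) then 1 else 0))"
    by (simp add: sum_app2 mat_scale_def Em_def prod_eq_iff conj_commute eq_commute)
  also have "\<dots> = M i j"
    using assms by (cases "(i,j) \<in> F") (auto simp: if_distrib cong: if_cong)
  finally show "M i j = (\<Sum>e\<in>F. mat_scale (M (fst e) (snd e)) (Em (fst e) (snd e))) i j" by simp
qed

lemma bracket_add: "mat_bracket n x (a + b) = mat_bracket n x a + mat_bracket n x b"
  by (auto simp: mat_bracket_def mat_mult_def fun_eq_iff algebra_simps sum.distrib)

lemma bracket_scale: "mat_bracket n x (mat_scale c a) = mat_scale c (mat_bracket n x a)"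
  by (auto simp: mat_bracket_def mat_mult_def mat_scale_def fun_eq_iff algebra_simps sum_distrib_left)

lemma bracket_zero: "mat_bracket n x 0 = 0"
  by (auto simp: mat_bracket_def mat_mult_def fun_eq_iff)

lemma bracket_sum:
  "mat_bracket n x (\<Sum>e\<in>A. f e) = (\<Sum>e\<in>A. mat_bracket n x (f e))"
proof (induction A rule: infinite_finite_induct)
  case (infinite A)
  then show ?case by (metis sum.infinite bracket_zero)
next
  case empty
  then show ?case by (metis sum.empty bracket_zero)
next
  case (insert a F)
  then show ?case by (metis sum.insert bracket_add)
qed

lemma bracket_self: "mat_bracket n x x = 0"
  by (auto simp: mat_bracket_def fun_eq_iff)


lemma bracket_Em:
  "mat_bracket n x (Em p q) i j =
     (if j = q \<and> p \<in> {1..n} then x i p else 0) - (if i = p \<and> q \<in> {1..n} then x q j else 0)"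
proof -
  have 1: "(\<Sum>k\<in>{1..n}. x i k * Em p q k j) = (\<Sum>k\<in>{1..n}. if k = p then (if j = q then x i p else 0) else 0)"
    by (rule sum.cong) (auto simp: Em_def)
  have 2: "(\<Sum>k\<in>{1..n}. Em p q i k * x k j) = (\<Sum>k\<in>{1..n}. if k = q then (if i = p then x q j else 0) else 0)"
    by (rule sum.cong) (auto simp: Em_def)
  show ?thesis unfolding mat_bracket_def mat_mult_def 1 2 by (simp add: sum.delta)
qed

lemma bracket_entry:
  "mat_bracket n x y i j = (\<Sum>k\<in>{1..n}. x i k * y k j) - (\<Sum>k\<in>{1..n}. y i k * x k j)"
  unfolding mat_bracket_def mat_mult_def by simp

lemma Rel_E_facts:
  assumes "(p, q) \<in> Rel_E A R"
  shows "(i, p) \<notin> strict_rel R" "(q, j) \<notin> strict_rel R" "(p, q) \<in> strict_rel R"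
  using assms unfolding Rel_E_def Ext_def minimal_elts_def maximal_elts_def by blast+

lemma rank_bounds:
  fixes R :: "(nat \<times> nat) set" and x :: "nat \<Rightarrow> nat \<Rightarrow> 'k::field"
  assumes sub: "R \<subseteq> {1..n} \<times> {1..n}" and tr: "trans R"
    and lab: "\<And>a b. (a, b) \<in> R \<Longrightarrow> a \<le> b"
    and xL: "x \<in> poset_lie_alg R"
  shows "ad_rank n (poset_lie_alg R) x \<le> card (strict_rel R - Rel_E {1..n} R) - 1
       \<and> ad_rank n (poset_lie_alg R) x \<le> card (Rel_nonC R)"
proof -
  interpret V: vector_space "mat_scale :: 'k \<Rightarrow> _" by (rule vs_mat)
  define SR where "SR = strict_rel R"
  define L where "L = (poset_lie_alg R :: (nat \<Rightarrow> nat \<Rightarrow> 'k) set)"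
  define ad where "ad = mat_bracket n x"
  define S where "S = SR - Rel_E {1..n} R"
  have SRsub: "SR \<subseteq> {1..n} \<times> {1..n}" using sub unfolding SR_def strict_rel_def by auto
  have finSR: "finite SR" by (rule finite_subset[OF SRsub]) auto
  have finS: "finite S" using finSR unfolding S_def by auto
  have RESR: "Rel_E {1..n} R \<subseteq> SR" unfolding SR_def Rel_E_def by auto
  have xz: "\<And>i j. (i, j) \<notin> SR \<Longrightarrow> x i j = 0" using xL unfolding poset_lie_alg_def SR_def by auto
  have yz: "\<And>y i j. y \<in> L \<Longrightarrow> (i, j) \<notin> SR \<Longrightarrow> y i j = 0" unfolding L_def poset_lie_alg_def SR_def by auto
  have rank: "ad_rank n L x = V.dim (ad ` L)" unfolding ad_rank_def ad_def ..
  define G where "G = (\<lambda>e. ad (Em (fst e) (snd e)))"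
  have adE0: "G e = 0" if "e \<in> Rel_E {1..n} R" for e
  proof -
    obtain p q where e: "e = (p, q)" by (cases e)
    have "\<And>i. x i p = 0" using Rel_E_facts(1)[of p q _ R] that e xz unfolding SR_def by auto
    moreover have "\<And>j. x q j = 0" using Rel_E_facts(2)[of p q _ R] that e xz unfolding SR_def by auto
    ultimately show ?thesis unfolding G_def ad_def e by (auto simp: fun_eq_iff bracket_Em)
  qed
  have expand: "ad y = (\<Sum>e\<in>S. mat_scale (y (fst e) (snd e)) (G e))" if "y \<in> L" for y
  proof -
    have "y = (\<Sum>e\<in>SR. mat_scale (y (fst e) (snd e)) (Em (fst e) (snd e)))"
      by (rule mat_decomp[OF finSR]) (use yz that in auto)
    then have "ad y = (\<Sum>e\<in>SR. mat_scale (y (fst e) (snd e)) (G e))"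
      unfolding G_def ad_def by (metis (no_types, lifting) bracket_scale bracket_sum sum.cong)
    also have "\<dots> = (\<Sum>e\<in>S. mat_scale (y (fst e) (snd e)) (G e)) +
                    (\<Sum>e\<in>Rel_E {1..n} R. mat_scale (y (fst e) (snd e)) (G e))"
      unfolding S_def using sum.subset_diff[OF RESR finSR] by simp
    also have "(\<Sum>e\<in>Rel_E {1..n} R. mat_scale (y (fst e) (snd e)) (G e)) = 0"
      by (rule sum.neutral) (simp add: adE0 V.scale_zero_right)
    finally show ?thesis by simp
  qed
  have part1: "V.dim (ad ` L) \<le> card S - 1"
  proof (cases "\<exists>e0\<in>S. x (fst e0) (snd e0) \<noteq> 0")
    case True
    then obtain e0 where e0: "e0 \<in> S" "x (fst e0) (snd e0) \<noteq> 0" by blast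
    define T where "T = G ` (S - {e0})"
    define c where "c = x (fst e0) (snd e0)"
    have xL': "x \<in> L" using xL unfolding L_def .
    have "0 = ad x" unfolding ad_def by (rule bracket_self[symmetric])
    also have "\<dots> = mat_scale c (G e0) + (\<Sum>e\<in>S - {e0}. mat_scale (x (fst e) (snd e)) (G e))"
      using expand[OF xL'] sum.remove[OF finS e0(1)] unfolding c_def by simp
    finally have eq: "mat_scale c (G e0) = - (\<Sum>e\<in>S - {e0}. mat_scale (x (fst e) (snd e)) (G e))"
      by (metis add.commute add_eq_0_iff)
    have "mat_scale c (G e0) \<in> V.span T" unfolding eq T_def
      by (intro V.span_neg V.span_sum V.span_scale V.span_base) auto
    then have "mat_scale (inverse c) (mat_scale c (G e0)) \<in> V.span T" by (rule V.span_scale)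
    moreover have "mat_scale (inverse c) (mat_scale c (G e0)) = G e0"
      using e0(2) unfolding c_def by (simp add: V.scale_scale)
    ultimately have Ge0: "G e0 \<in> V.span T" by simp
    have "ad ` L \<subseteq> V.span T"
    proof
      fix z assume "z \<in> ad ` L"
      then obtain y where y: "y \<in> L" "z = ad y" by blast
      have "\<And>e. e \<in> S \<Longrightarrow> G e \<in> V.span T"
        using Ge0 unfolding T_def by (metis DiffI V.span_base image_eqI singletonD)
      then show "z \<in> V.span T" unfolding y(2) expand[OF y(1)]
        by (intro V.span_sum V.span_scale) auto
    qed
    then have "V.dim (ad ` L) \<le> card T" by (rule V.dim_le_card) (simp add: T_def finS)
    also have "\<dots> \<le> card (S - {e0})" unfolding T_def by (rule card_image_le) (simp add: finS)
    also have "\<dots> = card S - 1" using e0(1) finS by simp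
    finally show ?thesis .
  next
    case False
    have "ad y = 0" if y: "y \<in> L" for y
    proof (rule ext, rule ext)
      fix i j
      have t1: "x i k * y k j = 0" for k
      proof (cases "x i k = 0")
        case False
        then have "(i, k) \<in> SR" using xz by blast
        moreover have "(i, k) \<notin> S" using \<open>\<not> (\<exists>e0\<in>S. x (fst e0) (snd e0) \<noteq> 0)\<close> False by force
        ultimately have "(i, k) \<in> Rel_E {1..n} R" unfolding S_def by blast
        then have "(k, j) \<notin> SR" using Rel_E_facts(2) unfolding SR_def by blast
        then show ?thesis using yz[OF y] by simp
      qed simp
      have t2: "y i k * x k j = 0" for k
      proof (cases "x k j = 0")
        case False
        then have "(k, j) \<in> SR" using xz by blast
        moreover have "(k, j) \<notin> S" using \<open>\<not> (\<exists>e0\<in>S. x (fst e0) (snd e0) \<noteq> 0)\<close> False by force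
        ultimately have "(k, j) \<in> Rel_E {1..n} R" unfolding S_def by blast
        then have "(i, k) \<notin> SR" using Rel_E_facts(1) unfolding SR_def by blast
        then show ?thesis using yz[OF y] by simp
      qed simp
      show "ad y i j = 0 i j" unfolding ad_def bracket_entry by (simp add: t1 t2)
    qed
    then have "ad ` L \<subseteq> V.span {}" using V.span_zero by auto
    then have "V.dim (ad ` L) \<le> card ({} :: (nat \<Rightarrow> nat \<Rightarrow> 'k) set)" by (rule V.dim_le_card) simp
    then show ?thesis by simp
  qed
  have part2: "V.dim (ad ` L) \<le> card (Rel_nonC R)"
  proof -
    have finN: "finite (Rel_nonC R)"
      by (rule finite_subset[OF _ finSR]) (auto simp: Rel_nonC_def SR_def)
    define T where "T = (\<lambda>e. Em (fst e) (snd e) :: nat \<Rightarrow> nat \<Rightarrow> 'k) ` Rel_nonC R"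
    have "ad ` L \<subseteq> V.span T"
    proof
      fix z assume "z \<in> ad ` L"
      then obtain y where y: "y \<in> L" "z = ad y" by blast
      have zero: "ad y i j = 0" if nij: "(i, j) \<notin> Rel_nonC R" for i j
      proof -
        have key: "(i, k) \<in> SR \<Longrightarrow> (k, j) \<in> SR \<Longrightarrow> False" for k
        proof -
          assume a: "(i, k) \<in> SR" "(k, j) \<in> SR"
          then have "(i, j) \<in> R" using tr unfolding SR_def strict_rel_def trans_def by blast
          moreover have "i \<noteq> j" using a lab unfolding SR_def strict_rel_def
            by (metis (mono_tags, lifting) case_prodD le_antisym mem_Collect_eq)
          ultimately show False using nij a unfolding Rel_nonC_def SR_def strict_rel_def by blast
        qed
        have t1: "x i k * y k j = 0" for k using key[of k] xz yz[OF y(1)] by force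
        have t2: "y i k * x k j = 0" for k using key[of k] xz yz[OF y(1)] by force
        show ?thesis unfolding ad_def bracket_entry by (simp add: t1 t2)
      qed
      have "ad y = (\<Sum>e\<in>Rel_nonC R. mat_scale (ad y (fst e) (snd e)) (Em (fst e) (snd e)))"
        by (rule mat_decomp[OF finN]) (use zero in auto)
      also have "\<dots> \<in> V.span T" unfolding T_def
        by (intro V.span_sum V.span_scale V.span_base) auto
      finally show "z \<in> V.span T" using y by simp
    qed
    then have "V.dim (ad ` L) \<le> card T" by (rule V.dim_le_card) (simp add: T_def finN)
    also have "\<dots> \<le> card (Rel_nonC R)" unfolding T_def by (rule card_image_le[OF finN])
    finally show ?thesis .
  qed
  show ?thesis using part1 part2 rank unfolding L_def S_def SR_def by simp
qed

theorem proposition5: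
  fixes n :: nat and R :: "(nat \<times> nat) set"
  assumes "partial_order_on {1..n} R"
    and "\<And>x y. (x, y) \<in> R \<Longrightarrow> x \<le> y"
  defines "L \<equiv> (poset_lie_alg R :: (nat \<Rightarrow> nat \<Rightarrow> 'k::{alg_closed_field, field_char_0}) set)"
  shows "breadth n L \<le> card (strict_rel R - Rel_E {1..n} R) - 1 \<and>
         breadth n L \<le> card (Rel_nonC R)"
proof -
  have sub: "R \<subseteq> {1..n} \<times> {1..n}" and tr: "trans R"
    using assms(1) unfolding partial_order_on_def preorder_on_def by auto
  define b1 where "b1 = card (strict_rel R - Rel_E {1..n} R) - 1"
  define b2 where "b2 = card (Rel_nonC R)"
  have bd: "\<forall>a \<in> ad_rank n L ` L. a \<le> b1 \<and> a \<le> b2"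
    using rank_bounds[OF sub tr assms(2)] unfolding L_def b1_def b2_def by blast
  have fin: "finite (ad_rank n L ` L)"
    by (rule finite_subset[of _ "{..b1}"]) (use bd in auto)
  have ne: "ad_rank n L ` L \<noteq> {}"
  proof -
    have "(0 :: nat \<Rightarrow> nat \<Rightarrow> 'k) \<in> L" unfolding L_def poset_lie_alg_def by simp
    then show ?thesis by blast
  qed
  show ?thesis unfolding breadth_def b1_def[symmetric] b2_def[symmetric]
    using bd fin ne by (simp add: Max_le_iff)
qed

end
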